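(* Let $P$ and $Q$ be finite posets and let $P+Q$ be their disjoint union, labeled by a bijection $\omega:P+Q\to[n]$, where $n=|P+Q|$ and $p=|P|$. Fix $s\in P$ such that $\omega(s)>\omega(t)$ for all $t\in Q$. Then $$(1-q^n)\,G_{P+Q;s}(q)=(1-q^p)\,G_{P;s}(q)\,G_Q(q).$$
   Context: $\mathbb{N}=\{0,1,2,\dots\}$. For a poset $R$ with an injective labeling $\omega_R:R\to\mathbb{Z}$, an $(R,\omega_R)$-partition is a map $f:R\to\mathbb{N}$ with $f(x)\ge f(y)$ whenever $x\le y$, and $f(x)>f(y)$ whenever $x\le y$ and $\omega_R(x)>\omega_R(y)$; for $s\in R$, an $(R,\omega_R;s)$-partition is an $(R,\omega_R)$-partition with $f(s)\le f(t)$ for all $t\in R$ and such that $f(s)=f(t)$, $t\ne s$, implies $\omega_R(s)>\omega_R(t)$. The size of $f$ is $\sum_{t\in R}f(t)$. $G_{P+Q;s}(q)$ is the generating function (by size) of $(P+Q,\omega;s)$-partitions; $G_{P;s}(q)$ that of $(P,\omega|_P;s)$-partitions; $G_Q(q)$ that of $(Q,\omega|_Q)$-partitions. *)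

theory Defs
  imports "HOL-Computational_Algebra.Formal_Power_Series"
begin

text \<open>A labeled poset is given by a carrier R, an order relation le (a set of pairs,
  le x y meaning x \<le> y) and an injective labeling w into the integers.
  Maps f : R \<rightarrow> nat are represented as functions 'a \<Rightarrow> nat that vanish outside R.\<close>

definition RP_partition :: "'a set \<Rightarrow> ('a \<times> 'a) set \<Rightarrow> ('a \<Rightarrow> int) \<Rightarrow> ('a \<Rightarrow> nat) \<Rightarrow> bool" where
  "RP_partition R le w f \<longleftrightarrow>
     (\<forall>x. x \<notin> R \<longrightarrow> f x = 0) \<and>
     (\<forall>x\<in>R. \<forall>y\<in>R. (x, y) \<in> le \<longrightarrow> f x \<ge> f y) \<and>
     (\<forall>x\<in>R. \<forall>y\<in>R. (x, y) \<in> le \<and> w x > w y \<longrightarrow> f x > f y)"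

definition RPs_partition :: "'a set \<Rightarrow> ('a \<times> 'a) set \<Rightarrow> ('a \<Rightarrow> int) \<Rightarrow> 'a \<Rightarrow> ('a \<Rightarrow> nat) \<Rightarrow> bool" where
  "RPs_partition R le w s f \<longleftrightarrow>
     RP_partition R le w f \<and>
     (\<forall>t\<in>R. f s \<le> f t) \<and>
     (\<forall>t\<in>R. f s = f t \<and> t \<noteq> s \<longrightarrow> w s > w t)"

definition size_gf :: "'a set \<Rightarrow> (('a \<Rightarrow> nat) \<Rightarrow> bool) \<Rightarrow> int fps" where
  "size_gf R Pred = Abs_fps (\<lambda>k. int (card {f. Pred f \<and> (\<Sum>t\<in>R. f t) = k}))"

definition G_gf :: "'a set \<Rightarrow> ('a \<times> 'a) set \<Rightarrow> ('a \<Rightarrow> int) \<Rightarrow> int fps" where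
  "G_gf R le w = size_gf R (RP_partition R le w)"

definition Gs_gf :: "'a set \<Rightarrow> ('a \<times> 'a) set \<Rightarrow> ('a \<Rightarrow> int) \<Rightarrow> 'a \<Rightarrow> int fps" where
  "Gs_gf R le w s = size_gf R (RPs_partition R le w s)"

end

theory Submission
  imports Defs
begin

lemma fin_funs:
  assumes "finite R"
  shows "finite {f::'a\<Rightarrow>nat. (\<forall>x. x \<notin> R \<longrightarrow> f x = 0) \<and> sum f R = k}"
proof -
  let ?h = "\<lambda>g x. if x \<in> R then g x else (0::nat)"
  have "{f::'a\<Rightarrow>nat. (\<forall>x. x \<notin> R \<longrightarrow> f x = 0) \<and> sum f R = k} \<subseteq> ?h ` (PiE R (\<lambda>_. {..k}))"
  proof
    fix f :: "'a \<Rightarrow> nat" assume f: "f \<in> {f. (\<forall>x. x \<notin> R \<longrightarrow> f x = 0) \<and> sum f R = k}"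
    have "restrict f R \<in> PiE R (\<lambda>_. {..k})"
      using f member_le_sum[of _ R f] assms by auto
    moreover have "f = ?h (restrict f R)" using f by auto
    ultimately show "f \<in> ?h ` (PiE R (\<lambda>_. {..k}))" by blast
  qed
  moreover have "finite (?h ` (PiE R (\<lambda>_. {..k})))" using assms by (simp add: finite_PiE)
  ultimately show ?thesis by (rule finite_subset)
qed

lemma RP_vanish: "RP_partition R le w f \<Longrightarrow> x \<notin> R \<Longrightarrow> f x = 0"
  by (simp add: RP_partition_def)

lemma RPs_vanish: "RPs_partition R le w s f \<Longrightarrow> x \<notin> R \<Longrightarrow> f x = 0"
  by (simp add: RPs_partition_def RP_partition_def)

lemma fin_pred:
  fixes Pr :: "('a \<Rightarrow> nat) \<Rightarrow> bool"
  assumes "finite R" and "\<And>f x. Pr f \<Longrightarrow> x \<notin> R \<Longrightarrow> f x = 0"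
  shows "finite {f. Pr f \<and> sum f R = k}"
  by (rule finite_subset[OF _ fin_funs[OF assms(1), of k]]) (use assms(2) in auto)

definition sh :: "'a set \<Rightarrow> ('a \<Rightarrow> nat) \<Rightarrow> 'a \<Rightarrow> nat" where
  "sh R g = (\<lambda>x. if x \<in> R then g x + 1 else 0)"

lemma sh_RPs:
  assumes "RPs_partition R le w s g" "s \<in> R"
  shows "RPs_partition R le w s (sh R g)"
  using assms unfolding RPs_partition_def RP_partition_def sh_def by auto

lemma sh_sum: "finite R \<Longrightarrow> sum (sh R g) R = sum g R + card R"
  by (simp add: sh_def sum_Suc)

lemma unsh:
  assumes "RPs_partition R le w s f" "s \<in> R" "f s > 0"
  shows "RPs_partition R le w s (\<lambda>x. if x \<in> R then f x - 1 else 0)" (is ?A)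
    and "f = sh R (\<lambda>x. if x \<in> R then f x - 1 else 0)" (is ?B)
proof -
  have "\<forall>t\<in>R. f s \<le> f t" using assms(1) unfolding RPs_partition_def by blast
  then have pos: "\<forall>t\<in>R. f t > 0" using assms(3) by (meson less_le_trans)
  let ?g = "\<lambda>x. if x \<in> R then f x - 1 else 0"
  have f: "RP_partition R le w f" "\<forall>t\<in>R. f s \<le> f t" "\<forall>t\<in>R. f s = f t \<and> t \<noteq> s \<longrightarrow> w s > w t"
    using assms(1) unfolding RPs_partition_def by auto
  have g1: "RP_partition R le w ?g"
    unfolding RP_partition_def
  proof (intro conjI ballI allI impI)
    fix x y assume xy: "x \<in> R" "y \<in> R" "(x, y) \<in> le"
    then have "f x \<ge> f y" using f(1) unfolding RP_partition_def by blast
    then show "?g x \<ge> ?g y" using xy by simp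
  next
    fix x y assume xy: "x \<in> R" "y \<in> R" "(x, y) \<in> le \<and> w x > w y"
    then have "f x > f y" using f(1) unfolding RP_partition_def by blast
    moreover have "f y > 0" using pos xy by blast
    ultimately show "?g x > ?g y" using xy by simp
  qed simp
  have g2: "\<forall>t\<in>R. ?g s \<le> ?g t" using f(2) assms(2) by (simp add: diff_le_mono)
  have g3: "\<forall>t\<in>R. ?g s = ?g t \<and> t \<noteq> s \<longrightarrow> w s > w t"
  proof (intro ballI impI)
    fix t assume t: "t \<in> R" "?g s = ?g t \<and> t \<noteq> s"
    moreover have "f s > 0" "f t > 0" using pos assms(2) t(1) by auto
    ultimately have "f s = f t" using assms(2) t(1) by (simp; linarith)
    then show "w s > w t" using f(3) t by blast
  qed
  show ?A unfolding RPs_partition_def using g1 g2 g3 by blast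
  show ?B unfolding sh_def
  proof
    fix x show "f x = (if x \<in> R then ?g x + 1 else 0)"
    proof (cases "x \<in> R")
      case True then show ?thesis using pos by simp
    next
      case False then show ?thesis using RPs_vanish[OF assms(1) False] by simp
    qed
  qed
qed

lemma shift_card:
  assumes R: "finite R" "s \<in> R"
  shows "card {f. RPs_partition R le w s f \<and> sum f R = k}
       = card {f. RPs_partition R le w s f \<and> f s = 0 \<and> sum f R = k}
         + (if k < card R then 0 else card {f. RPs_partition R le w s f \<and> sum f R = k - card R})"
proof -
  let ?S0 = "{f. RPs_partition R le w s f \<and> f s = 0 \<and> sum f R = k}"
  let ?S1 = "{f. RPs_partition R le w s f \<and> f s > 0 \<and> sum f R = k}"
  let ?T = "{g. RPs_partition R le w s g \<and> sum g R + card R = k}"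
  have fin: "finite {f. RPs_partition R le w s f \<and> sum f R = k}"
    by (rule fin_pred[OF R(1)]) (rule RPs_vanish)
  have split: "{f. RPs_partition R le w s f \<and> sum f R = k} = ?S0 \<union> ?S1" by auto
  have f0: "finite ?S0" by (rule finite_subset[OF _ fin]) blast
  have f1: "finite ?S1" by (rule finite_subset[OF _ fin]) blast
  have d: "?S0 \<inter> ?S1 = {}" by auto
  have c1: "card {f. RPs_partition R le w s f \<and> sum f R = k} = card ?S0 + card ?S1"
    unfolding split by (rule card_Un_disjoint[OF f0 f1 d])
  have img: "?S1 = sh R ` ?T"
  proof
    show "?S1 \<subseteq> sh R ` ?T"
    proof
      fix f assume f: "f \<in> ?S1"
      let ?g = "\<lambda>x. if x \<in> R then f x - 1 else 0"
      have fP: "RPs_partition R le w s f" "f s > 0" using f by auto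
      have g: "RPs_partition R le w s ?g" "f = sh R ?g"
        by (rule unsh(1)[OF fP(1) R(2) fP(2)], rule unsh(2)[OF fP(1) R(2) fP(2)])
      have "sum f R = sum (sh R ?g) R" by (rule arg_cong[where f="\<lambda>h. sum h R", OF g(2)])
      also have "\<dots> = sum ?g R + card R" by (rule sh_sum[OF R(1)])
      finally have "sum f R = sum ?g R + card R" .
      then have "?g \<in> ?T" using g(1) fP f by auto
      then show "f \<in> sh R ` ?T" by (rule image_eqI[where f="sh R", OF g(2)])
    qed
    show "sh R ` ?T \<subseteq> ?S1"
    proof
      fix f assume "f \<in> sh R ` ?T"
      then obtain g where g: "g \<in> ?T" "f = sh R g" by blast
      have "RPs_partition R le w s (sh R g)" using sh_RPs[OF _ R(2)] g(1) by blast
      moreover have "sh R g s > 0" using R(2) by (simp add: sh_def)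
      moreover have "sum (sh R g) R = k" using sh_sum[OF R(1), of g] g(1) by simp
      ultimately show "f \<in> ?S1" using g(2) by blast
    qed
  qed
  have inj: "inj_on (sh R) ?T"
  proof
    fix g1 g2 assume g: "g1 \<in> ?T" "g2 \<in> ?T" "sh R g1 = sh R g2"
    show "g1 = g2"
    proof
      fix x show "g1 x = g2 x"
      proof (cases "x \<in> R")
        case True then show ?thesis using fun_cong[OF g(3), of x] by (simp add: sh_def)
      next
        case False
        have "g1 x = 0" using g(1) RPs_vanish[OF _ False] by blast
        moreover have "g2 x = 0" using g(2) RPs_vanish[OF _ False] by blast
        ultimately show ?thesis by simp
      qed
    qed
  qed
  have "card ?S1 = card ?T" unfolding img by (rule card_image[OF inj])
  also have "card ?T = (if k < card R then 0 else card {f. RPs_partition R le w s f \<and> sum f R = k - card R})"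
  proof (cases "k < card R")
    case True then have "?T = {}" by simp
    then show ?thesis using True by simp
  next
    case False then have "?T = {f. RPs_partition R le w s f \<and> sum f R = k - card R}" by (intro Collect_cong) linarith
    then show ?thesis using False by simp
  qed
  finally show ?thesis using c1 by simp
qed

lemma shift_gf:
  assumes R: "finite R" "s \<in> R"
  shows "Gs_gf R le w s = size_gf R (\<lambda>f. RPs_partition R le w s f \<and> f s = 0)
           + fps_X ^ card R * Gs_gf R le w s"
proof (rule fps_ext)
  fix k
  show "fps_nth (Gs_gf R le w s) k = fps_nth (size_gf R (\<lambda>f. RPs_partition R le w s f \<and> f s = 0)
           + fps_X ^ card R * Gs_gf R le w s) k"
    unfolding fps_add_nth fps_X_power_mult_nth Gs_gf_def size_gf_def
    using shift_card[OF R, of le w k] by simp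
qed



definition comb :: "'a set \<Rightarrow> ('a \<Rightarrow> nat) \<Rightarrow> ('a \<Rightarrow> nat) \<Rightarrow> 'a \<Rightarrow> nat" where
  "comb P g h = (\<lambda>x. if x \<in> P then g x else h x)"

definition rst :: "'a set \<Rightarrow> ('a \<Rightarrow> nat) \<Rightarrow> 'a \<Rightarrow> nat" where
  "rst P f = (\<lambda>x. if x \<in> P then f x else 0)"

lemma comb_RPs:
  assumes PQ: "P \<inter> Q = {}" "leP \<subseteq> P \<times> P" "leQ \<subseteq> Q \<times> Q" "s \<in> P" "\<forall>t\<in>Q. w s > w t"
    and g: "RPs_partition P leP w s g" "g s = 0" and h: "RP_partition Q leQ w h"
  shows "RPs_partition (P \<union> Q) (leP \<union> leQ) w s (comb P g h)"
proof -
  have gP: "RP_partition P leP w g" "\<forall>t\<in>P. g s = g t \<and> t \<noteq> s \<longrightarrow> w s > w t"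
    using g(1) unfolding RPs_partition_def by auto
  have A: "RP_partition (P \<union> Q) (leP \<union> leQ) w (comb P g h)"
    unfolding RP_partition_def
  proof (intro conjI ballI allI impI)
    fix x assume "x \<notin> P \<union> Q"
    then show "comb P g h x = 0" using h unfolding comb_def RP_partition_def by auto
  next
    fix x y assume xy: "x \<in> P \<union> Q" "y \<in> P \<union> Q" "(x, y) \<in> leP \<union> leQ"
    show "comb P g h x \<ge> comb P g h y"
    proof (cases "(x, y) \<in> leP")
      case True
      then have "x \<in> P" "y \<in> P" using PQ(2) by auto
      then show ?thesis using True gP(1) unfolding comb_def RP_partition_def by auto
    next
      case False
      then have "(x, y) \<in> leQ" using xy by blast
      then have "x \<in> Q" "y \<in> Q" using PQ(3) by auto
      then have "x \<notin> P" "y \<notin> P" using PQ(1) by auto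
      then show ?thesis using \<open>(x, y) \<in> leQ\<close> \<open>x \<in> Q\<close> \<open>y \<in> Q\<close> h unfolding comb_def RP_partition_def by auto
    qed
  next
    fix x y assume xy: "x \<in> P \<union> Q" "y \<in> P \<union> Q" "(x, y) \<in> leP \<union> leQ \<and> w x > w y"
    show "comb P g h x > comb P g h y"
    proof (cases "(x, y) \<in> leP")
      case True
      then have "x \<in> P" "y \<in> P" using PQ(2) by auto
      then show ?thesis using True xy gP(1) unfolding comb_def RP_partition_def by auto
    next
      case False
      then have "(x, y) \<in> leQ" using xy by blast
      then have "x \<in> Q" "y \<in> Q" using PQ(3) by auto
      then have "x \<notin> P" "y \<notin> P" using PQ(1) by auto
      then show ?thesis using \<open>(x, y) \<in> leQ\<close> \<open>x \<in> Q\<close> \<open>y \<in> Q\<close> xy h unfolding comb_def RP_partition_def by auto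
    qed
  qed
  have B: "\<forall>t\<in>P \<union> Q. comb P g h s \<le> comb P g h t"
    using g(2) PQ(4) by (simp add: comb_def)
  have C: "\<forall>t\<in>P \<union> Q. comb P g h s = comb P g h t \<and> t \<noteq> s \<longrightarrow> w s > w t"
  proof (intro ballI impI)
    fix t assume t: "t \<in> P \<union> Q" "comb P g h s = comb P g h t \<and> t \<noteq> s"
    show "w s > w t"
    proof (cases "t \<in> P")
      case True
      then have "g s = g t" using t PQ(4) by (simp add: comb_def)
      then show ?thesis using gP(2) True t by blast
    next
      case False then show ?thesis using t PQ(5) by blast
    qed
  qed
  show ?thesis unfolding RPs_partition_def using A B C by blast
qed

lemma rst_RPs:
  assumes PQ: "P \<inter> Q = {}" "leP \<subseteq> P \<times> P" "leQ \<subseteq> Q \<times> Q" "s \<in> P"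
    and f: "RPs_partition (P \<union> Q) (leP \<union> leQ) w s f"
  shows "RPs_partition P leP w s (rst P f)" "RP_partition Q leQ w (rst Q f)"
    "f = comb P (rst P f) (rst Q f)"
proof -
  have fP: "RP_partition (P \<union> Q) (leP \<union> leQ) w f" "\<forall>t\<in>P \<union> Q. f s \<le> f t"
    "\<forall>t\<in>P \<union> Q. f s = f t \<and> t \<noteq> s \<longrightarrow> w s > w t"
    using f unfolding RPs_partition_def by auto
  have o1: "\<forall>x\<in>P \<union> Q. \<forall>y\<in>P \<union> Q. (x, y) \<in> leP \<union> leQ \<longrightarrow> f x \<ge> f y"
    and o2: "\<forall>x\<in>P \<union> Q. \<forall>y\<in>P \<union> Q. (x, y) \<in> leP \<union> leQ \<and> w x > w y \<longrightarrow> f x > f y"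
    and o3: "\<forall>x. x \<notin> P \<union> Q \<longrightarrow> f x = 0"
    using fP(1) unfolding RP_partition_def by blast+
  have "RP_partition P leP w (rst P f)"
    unfolding RP_partition_def rst_def using o1 o2 by auto
  moreover have "\<forall>t\<in>P. rst P f s \<le> rst P f t" using fP(2) PQ(4) by (simp add: rst_def)
  moreover have "\<forall>t\<in>P. rst P f s = rst P f t \<and> t \<noteq> s \<longrightarrow> w s > w t"
    using fP(3) PQ(4) by (simp add: rst_def)
  ultimately show "RPs_partition P leP w s (rst P f)" unfolding RPs_partition_def by blast
  show "RP_partition Q leQ w (rst Q f)"
    unfolding RP_partition_def rst_def using o1 o2 by auto
  show "f = comb P (rst P f) (rst Q f)"
    unfolding comb_def rst_def using o3 by auto
qed


lemma sum_comb:
  assumes "finite P" "finite Q" "P \<inter> Q = {}"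
  shows "sum (comb P g h) (P \<union> Q) = sum g P + sum h Q"
proof -
  have "sum (comb P g h) (P \<union> Q) = sum (comb P g h) P + sum (comb P g h) Q"
    by (rule sum.union_disjoint) (use assms in auto)
  moreover have "sum (comb P g h) P = sum g P" by (rule sum.cong) (auto simp: comb_def)
  moreover have "sum (comb P g h) Q = sum h Q" by (rule sum.cong) (use assms(3) in \<open>auto simp: comb_def\<close>)
  ultimately show ?thesis by simp
qed

lemma prod_card:
  assumes fin: "finite P" "finite Q"
    and PQ: "P \<inter> Q = {}" "leP \<subseteq> P \<times> P" "leQ \<subseteq> Q \<times> Q" "s \<in> P" "\<forall>t\<in>Q. w s > w t"
  shows "card {f. RPs_partition (P \<union> Q) (leP \<union> leQ) w s f \<and> f s = 0 \<and> sum f (P \<union> Q) = k}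
    = (\<Sum>i=0..k. card {g. RPs_partition P leP w s g \<and> g s = 0 \<and> sum g P = i}
                 * card {h. RP_partition Q leQ w h \<and> sum h Q = k - i})"
proof -
  define A where "A i = {g. RPs_partition P leP w s g \<and> g s = 0 \<and> sum g P = i}" for i
  define B where "B j = {h. RP_partition Q leQ w h \<and> sum h Q = j}" for j
  define S where "S = {f. RPs_partition (P \<union> Q) (leP \<union> leQ) w s f \<and> f s = 0 \<and> sum f (P \<union> Q) = k}"
  define Sig where "Sig = Sigma {0..k} (\<lambda>i. A i \<times> B (k - i))"
  define F where "F = (\<lambda>(i::nat, g, h). comb P g h)"
  have finA: "finite (A i)" for i
    unfolding A_def by (rule finite_subset[OF _ fin_pred[OF fin(1), of "RPs_partition P leP w s" i]])
      (auto intro: RPs_vanish)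
  have finB: "finite (B j)" for j
    unfolding B_def by (rule fin_pred[OF fin(2)]) (rule RP_vanish)
  have cSig: "card Sig = (\<Sum>i=0..k. card (A i) * card (B (k - i)))"
    unfolding Sig_def using finA finB by (simp add: card_cartesian_product)
  have inj: "inj_on F Sig"
  proof (rule inj_onI)
    fix a b assume a: "a \<in> Sig" and b: "b \<in> Sig" and e: "F a = F b"
    obtain i g h where ai: "a = (i, g, h)" by (cases a) auto
    obtain i' g' h' where bi: "b = (i', g', h')" by (cases b) auto
    have a': "RPs_partition P leP w s g" "sum g P = i" "RP_partition Q leQ w h"
      using a unfolding ai Sig_def A_def B_def by auto
    have b': "RPs_partition P leP w s g'" "sum g' P = i'" "RP_partition Q leQ w h'"
      using b unfolding bi Sig_def A_def B_def by auto
    have e': "comb P g h = comb P g' h'" using e unfolding F_def ai bi by simp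
    have gg: "g = g'"
    proof
      fix x show "g x = g' x"
      proof (cases "x \<in> P")
        case True then show ?thesis using fun_cong[OF e', of x] by (simp add: comb_def)
      next
        case False then show ?thesis using RPs_vanish[OF a'(1) False] RPs_vanish[OF b'(1) False] by simp
      qed
    qed
    have hh: "h = h'"
    proof
      fix x show "h x = h' x"
      proof (cases "x \<in> Q")
        case True then have "x \<notin> P" using PQ(1) by blast
        then show ?thesis using fun_cong[OF e', of x] by (simp add: comb_def)
      next
        case False then show ?thesis using RP_vanish[OF a'(3) False] RP_vanish[OF b'(3) False] by simp
      qed
    qed
    show "a = b" unfolding ai bi using gg hh a'(2) b'(2) by simp
  qed
  have img: "S = F ` Sig"
  proof
    show "F ` Sig \<subseteq> S"
    proof
      fix f assume "f \<in> F ` Sig"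
      then obtain i g h where m: "(i, g, h) \<in> Sig" and fe: "f = comb P g h" unfolding F_def by auto
      have g: "RPs_partition P leP w s g" "g s = 0" "sum g P = i" "i \<le> k"
        and h: "RP_partition Q leQ w h" "sum h Q = k - i"
        using m unfolding Sig_def A_def B_def by auto
      have "RPs_partition (P \<union> Q) (leP \<union> leQ) w s f"
        unfolding fe by (rule comb_RPs[OF PQ g(1,2) h(1)])
      moreover have "f s = 0" using fe g(2) PQ(4) by (simp add: comb_def)
      moreover have "sum f (P \<union> Q) = k" using fe sum_comb[OF fin PQ(1), of g h] g(3,4) h(2) by simp
      ultimately show "f \<in> S" unfolding S_def by blast
    qed
    show "S \<subseteq> F ` Sig"
    proof
      fix f assume "f \<in> S"
      then have f: "RPs_partition (P \<union> Q) (leP \<union> leQ) w s f" "f s = 0" "sum f (P \<union> Q) = k"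
        unfolding S_def by auto
      note r = rst_RPs[OF PQ(1-4) f(1)]
      have sk: "sum (rst P f) P + sum (rst Q f) Q = k"
        using sum_comb[OF fin PQ(1), of "rst P f" "rst Q f"] r(3) f(3) by simp
      have "(sum (rst P f) P, rst P f, rst Q f) \<in> Sig"
        unfolding Sig_def A_def B_def using r(1,2) sk f(2) PQ(4) by (auto simp: rst_def)
      moreover have "f = F (sum (rst P f) P, rst P f, rst Q f)" unfolding F_def using r(3) by simp
      ultimately show "f \<in> F ` Sig" by (rule rev_image_eqI)
    qed
  qed
  have "card S = card Sig" unfolding img by (rule card_image[OF inj])
  then show ?thesis unfolding S_def cSig A_def B_def by simp
qed

theorem lemma3p4:
  fixes P Q :: "'a set" and leP leQ :: "('a \<times> 'a) set"
    and \<omega> :: "'a \<Rightarrow> int" and s :: 'a and n p :: nat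
  assumes "finite P" and "finite Q" and "P \<inter> Q = {}"
    and "partial_order_on P leP" and "partial_order_on Q leQ"
    and "n = card (P \<union> Q)" and "p = card P"
    and "bij_betw \<omega> (P \<union> Q) {1..int n}"
    and "s \<in> P" and "\<forall>t\<in>Q. \<omega> s > \<omega> t"
  shows "(1 - fps_X ^ n) * Gs_gf (P \<union> Q) (leP \<union> leQ) \<omega> s
         = (1 - fps_X ^ p) * Gs_gf P leP \<omega> s * G_gf Q leQ \<omega>"
proof -
  have lP: "leP \<subseteq> P \<times> P" using assms(4) unfolding partial_order_on_def preorder_on_def by blast
  have lQ: "leQ \<subseteq> Q \<times> Q" using assms(5) unfolding partial_order_on_def preorder_on_def by blast
  define A0 where "A0 = size_gf P (\<lambda>f. RPs_partition P leP \<omega> s f \<and> f s = 0)"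
  define A1 where "A1 = size_gf (P \<union> Q) (\<lambda>f. RPs_partition (P \<union> Q) (leP \<union> leQ) \<omega> s f \<and> f s = 0)"
  have E1: "Gs_gf P leP \<omega> s = A0 + fps_X ^ p * Gs_gf P leP \<omega> s"
    unfolding A0_def assms(7) by (rule shift_gf[OF assms(1,9)])
  have E2: "Gs_gf (P \<union> Q) (leP \<union> leQ) \<omega> s = A1 + fps_X ^ n * Gs_gf (P \<union> Q) (leP \<union> leQ) \<omega> s"
    unfolding A1_def assms(6) by (rule shift_gf) (use assms(1,2,9) in auto)
  have E3: "A1 = A0 * G_gf Q leQ \<omega>"
  proof (rule fps_ext)
    fix k
    show "fps_nth A1 k = fps_nth (A0 * G_gf Q leQ \<omega>) k"
      unfolding fps_mult_nth A1_def A0_def G_gf_def size_gf_def fps_nth_Abs_fps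
      using prod_card[OF assms(1,2,3) lP lQ assms(9,10), of k] by simp
  qed
  have F1: "(1 - fps_X ^ p) * Gs_gf P leP \<omega> s = A0"
    using E1 by (simp add: algebra_simps)
  have F2: "(1 - fps_X ^ n) * Gs_gf (P \<union> Q) (leP \<union> leQ) \<omega> s = A1"
    using E2 by (simp add: algebra_simps)
  show ?thesis using F1 F2 E3 by simp
qed

end
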